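(* Suppose $D=\{(x,y),(y,x)\}$. Then every SCF-RT $(p,f)$ is rationalizable within the class of all RUM-CFs, i.e. there exists a RUM-CF $(u,g,r)$ that rationalizes $(p,f)$.
   Context: $X$ is a finite set of options; $C=\{(x,y): x,y\in X,\ x\neq y\}$; $D\subseteq C$ is the set of observed pairs. An SCF $p$ assigns to each $(x,y)\in D$ a number $p(x,y)>0$ with $p(x,y)+p(y,x)=1$. An SCF-RT is a pair $(p,f)$ where $p$ is an SCF and $f$ assigns to each $(x,y)\in D$ a strictly positive density $f(x,y)$ on $\mathbb{R}^+$ with cdf $F(x,y)$. A RUM is a pair $(u,g)$ with $u:X\to\mathbb{R}$ and $g$ assigning to each $(x,y)\in C$ a density $g(x,y)$ on $\mathbb{R}$ (cdf $G(x,y)$) with $\int v\,g(x,y)(v)\,dv=u(x)-u(y)$, $g(x,y)(v)=g(y,x)(-v)$ for all $v$, and connected support. A RUM-CF is $(u,g,r)$ with $(u,g)$ a RUM and $r:\mathbb{R}^{++}\to\mathbb{R}^+$ continuous, strictly decreasing where $r(v)>0$, $\lim_{v\to0}r(v)=\infty$, $\lim_{v\to\infty}r(v)=0$; $r^{-1}(t)$ ($t>0$) is the inverse of $r$ restricted to $\{r>0\}$. It rationalizes $(p,f)$ if for all $(x,y)\in D$: $G(x,y)(0)=p(y,x)$ and $\frac{1-G(x,y)(r^{-1}(t))}{1-G(x,y)(0)}=F(x,y)(t)$ for all $t>0$. *)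

theory Defs
  imports "HOL-Analysis.Analysis"
begin

definition SCF :: "('a \<times> 'a) set \<Rightarrow> ('a \<Rightarrow> 'a \<Rightarrow> real) \<Rightarrow> bool" where
  "SCF D p \<longleftrightarrow> (\<forall>(x, y) \<in> D. x \<noteq> y \<and> p x y > 0 \<and> p x y + p y x = 1)"

definition SCF_RT :: "('a \<times> 'a) set \<Rightarrow> ('a \<Rightarrow> 'a \<Rightarrow> real) \<Rightarrow> ('a \<Rightarrow> 'a \<Rightarrow> real \<Rightarrow> real) \<Rightarrow> bool" where
  "SCF_RT D p f \<longleftrightarrow> SCF D p \<and>
     (\<forall>(x, y) \<in> D. (\<forall>t > 0. f x y t > 0) \<and> (f x y has_integral 1) {0<..})"

definition cdf_pos :: "(real \<Rightarrow> real) \<Rightarrow> real \<Rightarrow> real" where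
  "cdf_pos h t = integral {0..t} h"

definition cdf :: "(real \<Rightarrow> real) \<Rightarrow> real \<Rightarrow> real" where
  "cdf h v = integral {..v} h"

definition RUM :: "('a \<Rightarrow> real) \<Rightarrow> ('a \<Rightarrow> 'a \<Rightarrow> real \<Rightarrow> real) \<Rightarrow> bool" where
  "RUM u g \<longleftrightarrow> (\<forall>x y. x \<noteq> y \<longrightarrow>
     (\<forall>v. g x y v \<ge> 0) \<and> (g x y has_integral 1) UNIV \<and>
     (\<lambda>v. v * g x y v) absolutely_integrable_on UNIV \<and>
     ((\<lambda>v. v * g x y v) has_integral (u x - u y)) UNIV \<and>
     (\<forall>v. g x y v = g y x (- v)) \<and>
     connected {v. g x y v > 0})"

definition CF :: "(real \<Rightarrow> real) \<Rightarrow> bool" where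
  "CF r \<longleftrightarrow> continuous_on {0<..} r \<and> (\<forall>v > 0. r v \<ge> 0) \<and>
     (\<forall>v w. 0 < v \<longrightarrow> v < w \<longrightarrow> r v > 0 \<longrightarrow> r w > 0 \<longrightarrow> r w < r v) \<and>
     filterlim r at_top (at_right 0) \<and> (r \<longlongrightarrow> 0) at_top"

definition rinv :: "(real \<Rightarrow> real) \<Rightarrow> real \<Rightarrow> real" where
  "rinv r t = the_inv_into {v. 0 < v \<and> 0 < r v} r t"

definition RUM_CF :: "('a \<Rightarrow> real) \<Rightarrow> ('a \<Rightarrow> 'a \<Rightarrow> real \<Rightarrow> real) \<Rightarrow> (real \<Rightarrow> real) \<Rightarrow> bool" where
  "RUM_CF u g r \<longleftrightarrow> RUM u g \<and> CF r"

definition rationalizes ::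
  "('a \<times> 'a) set \<Rightarrow> ('a \<Rightarrow> 'a \<Rightarrow> real) \<Rightarrow> ('a \<Rightarrow> 'a \<Rightarrow> real \<Rightarrow> real) \<Rightarrow>
   ('a \<Rightarrow> real) \<Rightarrow> ('a \<Rightarrow> 'a \<Rightarrow> real \<Rightarrow> real) \<Rightarrow> (real \<Rightarrow> real) \<Rightarrow> bool" where
  "rationalizes D p f u g r \<longleftrightarrow> (\<forall>(x, y) \<in> D.
     cdf (g x y) 0 = p y x \<and>
     (\<forall>t > 0. (1 - cdf (g x y) (rinv r t)) / (1 - cdf (g x y) 0) = cdf_pos (f x y) t))"

end

theory Submission
  imports Defs
begin



lemma cov:
  fixes f1 :: "real \<Rightarrow> real"
  assumes nn: "\<And>t. t > 0 \<Longrightarrow> f1 t \<ge> 0" and S: "S \<subseteq> {0<..}" "S \<in> sets lebesgue"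
    and int: "f1 integrable_on S"
  shows "((\<lambda>v. f1 (1/v - 1) / v^2) has_integral integral S f1) ((\<lambda>t. 1/(1+t)) ` S)"
proof -
  have der: "((\<lambda>t. 1/(1+t)) has_field_derivative (-1/(1+t)^2)) (at t within S)" if "t \<in> S" for t
  proof -
    have "t > 0" using that S by auto
    then show ?thesis
      by (auto intro!: derivative_eq_intros simp: power2_eq_square field_simps)
  qed
  have inj: "inj_on (\<lambda>t. 1/(1+t)) S"
    using S by (auto simp: inj_on_def field_simps)
  have eq: "\<bar>-1/(1+t)^2\<bar> * (f1 (1/(1/(1+t)) - 1) / (1/(1+t))^2) = f1 t" if "t \<in> S" for t
  proof -
    have "t > 0" using that S by auto
    then show ?thesis by (simp add: field_simps)
  qed
  have ai: "f1 absolutely_integrable_on S"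
    using int nn S by (intro nonnegative_absolutely_integrable_1) auto
  have "(\<lambda>t. \<bar>-1/(1+t)^2\<bar> * (f1 (1/(1/(1+t)) - 1) / (1/(1+t))^2)) absolutely_integrable_on S
     \<and> integral S (\<lambda>t. \<bar>-1/(1+t)^2\<bar> * (f1 (1/(1/(1+t)) - 1) / (1/(1+t))^2)) = integral S f1"
  proof
    show "(\<lambda>t. \<bar>-1/(1+t)^2\<bar> * (f1 (1/(1/(1+t)) - 1) / (1/(1+t))^2)) absolutely_integrable_on S"
      using ai eq by (metis (no_types, lifting) absolutely_integrable_spike empty_iff negligible_empty DiffE)
    show "integral S (\<lambda>t. \<bar>-1/(1+t)^2\<bar> * (f1 (1/(1/(1+t)) - 1) / (1/(1+t))^2)) = integral S f1"
      using eq by (intro integral_cong) auto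
  qed
  then have "(\<lambda>v. f1 (1/v - 1) / v^2) absolutely_integrable_on ((\<lambda>t. 1/(1+t)) ` S)
     \<and> integral ((\<lambda>t. 1/(1+t)) ` S) (\<lambda>v. f1 (1/v - 1) / v^2) = integral S f1"
    using has_absolute_integral_change_of_variables_1'[OF S(2) der inj] by blast
  then show ?thesis
    using set_lebesgue_integral_eq_integral(1) by (metis integrable_integral)
qed




definition Fe :: "(real \<Rightarrow> real) \<Rightarrow> real \<Rightarrow> real" where
  "Fe f1 v = (if 0 < v \<and> v < 1 then f1 (1/v - 1) / v^2 else 0)"

lemma img1: "(\<lambda>t::real. 1/(1+t)) ` {0<..} = {0<..<1}"
proof (rule set_eqI, rule iffI)
  fix v assume "v \<in> (\<lambda>t::real. 1/(1+t)) ` {0<..}" then show "v \<in> {0<..<1}" by auto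
next
  fix v :: real assume v: "v \<in> {0<..<1}"
  then have "v = 1/(1 + (1/v - 1))" "1/v - 1 \<in> {0<..}" by (auto simp: field_simps)
  then show "v \<in> (\<lambda>t::real. 1/(1+t)) ` {0<..}" by blast
qed

lemma img2: assumes "t > 0" shows "(\<lambda>t::real. 1/(1+t)) ` {0<..<t} = {1/(1+t)<..<1}"
proof (rule set_eqI, rule iffI)
  fix v assume "v \<in> (\<lambda>t::real. 1/(1+t)) ` {0<..<t}" then show "v \<in> {1/(1+t)<..<1}"
    using assms by (auto simp: field_simps)
next
  fix v :: real assume v: "v \<in> {1/(1+t)<..<1}"
  have "0 < 1/(1+t)" using assms by simp
  then have "v > 0" using v by (meson greaterThanLessThan_iff less_trans)
  with v assms have "v = 1/(1 + (1/v - 1))" "1/v - 1 \<in> {0<..<t}" by (auto simp: field_simps)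
  then show "v \<in> (\<lambda>t::real. 1/(1+t)) ` {0<..<t}" by blast
qed

lemma neg_sub: "S \<subseteq> T \<Longrightarrow> negligible {x \<in> S - T. P x}"
proof -
  assume "S \<subseteq> T"
  then have "{x \<in> S - T. P x} = {}" by auto
  then show ?thesis by (metis negligible_empty)
qed

context
  fixes f1 :: "real \<Rightarrow> real"
  assumes pos: "\<And>t. t > 0 \<Longrightarrow> f1 t > 0" and int1: "(f1 has_integral 1) {0<..}"
begin

lemma Fe_pos: "0 < v \<Longrightarrow> v < 1 \<Longrightarrow> Fe f1 v > 0"
proof -
  assume v: "0 < v" "v < 1"
  then have "1/v - 1 > 0" by (simp add: field_simps)
  then show ?thesis using v pos by (simp add: Fe_def)
qed

lemma Fe_nonneg: "Fe f1 v \<ge> 0"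
  using Fe_pos by (cases "0 < v \<and> v < 1") (auto simp: Fe_def less_imp_le)


lemma Fe_int: "(Fe f1 has_integral 1) UNIV"
proof -
  have "((\<lambda>v. f1 (1/v - 1) / v^2) has_integral integral {0<..} f1) ((\<lambda>t. 1/(1+t)) ` {0<..})"
    using int1 pos by (intro cov) (auto intro: less_imp_le)
  then have "((\<lambda>v. f1 (1/v - 1) / v^2) has_integral 1) {0<..<1}"
    using int1 img1 by (simp add: integral_unique)
  then have "((\<lambda>v. if v \<in> {0<..<1} then f1 (1/v - 1) / v^2 else 0) has_integral 1) UNIV"
    by (subst has_integral_restrict) auto
  then show ?thesis by (simp add: Fe_def[abs_def])
qed

lemma Fe_tail:
  assumes t: "t > 0"
  shows "(Fe f1 has_integral cdf_pos f1 t) {1/(1+t)<..}"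
proof -
  have i0: "f1 integrable_on {0..}"
  proof (rule integrable_spike_set)
    show "f1 integrable_on {0<..}" using int1 by blast
    have "{x \<in> {0<..} - {0..}. f1 x \<noteq> 0} = {}" by auto
    then show "negligible {x \<in> {0<..} - {0..}. f1 x \<noteq> 0}" by (metis negligible_empty)
    show "negligible {x \<in> {0..} - {0<..}. f1 x \<noteq> 0}"
      by (rule negligible_subset[of "{0}"]) auto
  qed
  have "f1 integrable_on {0..t}"
    using i0 by (rule integrable_on_subinterval) auto
  then have i1: "f1 integrable_on {0<..<t}"
  proof (rule integrable_spike_set)
    show "negligible {x \<in> {0..t} - {0<..<t}. f1 x \<noteq> 0}"
      by (rule negligible_subset[of "{0,t}"]) auto
    show "negligible {x \<in> {0<..<t} - {0..t}. f1 x \<noteq> 0}" by (rule neg_sub) auto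
  qed
  have e: "integral {0<..<t} f1 = integral {0..t} f1"
  proof -
    have "negligible {x \<in> {0<..<t} - {0..t}. f1 x \<noteq> 0}" by (rule neg_sub) auto
    moreover have "negligible {x \<in> {0..t} - {0<..<t}. f1 x \<noteq> 0}"
      by (rule negligible_subset[of "{0,t}"]) auto
    ultimately have "(f1 has_integral integral {0..t} f1) {0<..<t}"
      using has_integral_spike_set_eq \<open>f1 integrable_on {0..t}\<close> by blast
    then show ?thesis by (rule integral_unique)
  qed
  have "((\<lambda>v. f1 (1/v - 1) / v^2) has_integral integral {0<..<t} f1) ((\<lambda>t. 1/(1+t)) ` {0<..<t})"
    using i1 pos by (intro cov) (auto intro: less_imp_le)
  then have "((\<lambda>v. f1 (1/v - 1) / v^2) has_integral cdf_pos f1 t) {1/(1+t)<..<1}"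
    using img2[OF t] e by (simp add: cdf_pos_def)
  then have "((\<lambda>v. if v \<in> {1/(1+t)<..<1} then f1 (1/v - 1) / v^2 else 0) has_integral cdf_pos f1 t) UNIV"
    by (subst has_integral_restrict) auto
  moreover have "(\<lambda>v. if v \<in> {1/(1+t)<..<1} then f1 (1/v - 1) / v^2 else 0)
      = (\<lambda>v. if v \<in> {1/(1+t)<..} then Fe f1 v else 0)"
  proof
    fix v :: real
    have "0 < 1/(1+t)" using t by simp
    then have "v \<in> {1/(1+t)<..} \<Longrightarrow> 0 < v" by (meson greaterThan_iff less_trans)
    then show "(if v \<in> {1/(1+t)<..<1} then f1 (1/v - 1) / v^2 else 0)
      = (if v \<in> {1/(1+t)<..} then Fe f1 v else 0)"
      by (auto simp: Fe_def)
  qed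
  ultimately show ?thesis
    by (subst has_integral_restrict[symmetric, of _ UNIV]) auto
qed

end



definition H :: "real \<Rightarrow> (real \<Rightarrow> real) \<Rightarrow> (real \<Rightarrow> real) \<Rightarrow> real \<Rightarrow> real" where
  "H P f1 f2 v = (if v = 0 then 1 else P * Fe f1 v + (1-P) * Fe f2 (-v))"

lemma H_sym: "H P f1 f2 (-v) = H (1-P) f2 f1 v"
  by (simp add: H_def algebra_simps)

lemma Fe_zero: "\<not> (0 < v \<and> v < 1) \<Longrightarrow> Fe f v = 0"
  unfolding Fe_def by presburger

context
  fixes P :: real and f1 f2 :: "real \<Rightarrow> real"
  assumes P: "0 < P" "P < 1"
    and pos1: "\<And>t. t > 0 \<Longrightarrow> f1 t > 0" and int1: "(f1 has_integral 1) {0<..}"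
    and pos2: "\<And>t. t > 0 \<Longrightarrow> f2 t > 0" and int2: "(f2 has_integral 1) {0<..}"
begin

lemma H_nonneg: "H P f1 f2 v \<ge> 0"
  using Fe_nonneg[OF pos1 int1, of v] Fe_nonneg[OF pos2 int2, of "-v"] P
  by (simp add: H_def)

lemma Fe2_refl: "((\<lambda>v. Fe f2 (-v)) has_integral 1) UNIV"
proof -
  have "Fe f2 absolutely_integrable_on UNIV"
    using Fe_int[OF pos2 int2] Fe_nonneg[OF pos2 int2]
    by (intro nonnegative_absolutely_integrable_1) auto
  moreover have "integral UNIV (Fe f2) = 1"
    using Fe_int[OF pos2 int2] by (rule integral_unique)
  ultimately have "(\<lambda>x. Fe f2 (-x)) absolutely_integrable_on UNIV \<and> integral UNIV (\<lambda>x. Fe f2 (-x)) = 1"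
    using has_absolute_integral_reflect_real[of UNIV UNIV "Fe f2" 1] by auto
  then show ?thesis
    using set_lebesgue_integral_eq_integral(1) by (metis integrable_integral)
qed

lemma H_int: "(H P f1 f2 has_integral 1) UNIV"
proof -
  have "((\<lambda>v. P * Fe f1 v + (1-P) * Fe f2 (-v)) has_integral (P * 1 + (1-P) * 1)) UNIV"
    by (intro has_integral_add has_integral_mult_right Fe_int[OF pos1 int1] Fe2_refl)
  then have h1: "((\<lambda>v. P * Fe f1 v + (1-P) * Fe f2 (-v)) has_integral 1) UNIV" by simp
  show ?thesis
    by (rule has_integral_spike[OF negligible_sing[of 0] _ h1]) (auto simp: H_def)
qed

lemma H_cdf0: "cdf (H P f1 f2) 0 = 1 - P"
proof -
  have "((\<lambda>v. (1-P) * Fe f2 (-v)) has_integral ((1-P) * 1)) UNIV"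
    by (intro has_integral_mult_right Fe2_refl)
  then have h1: "((\<lambda>v. (1-P) * Fe f2 (-v)) has_integral (1-P)) UNIV" by simp
  have "((\<lambda>v. if v \<in> {..0} then H P f1 f2 v else 0) has_integral (1-P)) UNIV"
  proof (rule has_integral_spike[OF negligible_sing[of 0] _ h1])
    fix v :: real assume "v \<in> UNIV - {0}"
    then show "(if v \<in> {..0} then H P f1 f2 v else 0) = (1 - P) * Fe f2 (- v)"
      by (cases "v < 0") (auto simp: H_def Fe_zero)
  qed
  then have "(H P f1 f2 has_integral (1-P)) {..0}"
    by (subst has_integral_restrict[symmetric, of _ UNIV]) auto
  then show ?thesis by (simp add: cdf_def integral_unique)
qed

lemma H_tail:
  assumes t: "t > 0"
  shows "((\<lambda>v. if v \<in> {1/(1+t)<..} then H P f1 f2 v else 0) has_integral P * cdf_pos f1 t) UNIV"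
proof -
  have "((\<lambda>v. if v \<in> {1/(1+t)<..} then Fe f1 v else 0) has_integral cdf_pos f1 t) UNIV"
    using Fe_tail[OF pos1 int1 t] by (subst has_integral_restrict) auto
  then have "((\<lambda>v. P * (if v \<in> {1/(1+t)<..} then Fe f1 v else 0)) has_integral P * cdf_pos f1 t) UNIV"
    by (rule has_integral_mult_right)
  moreover have "(\<lambda>v. P * (if v \<in> {1/(1+t)<..} then Fe f1 v else 0))
     = (\<lambda>v. if v \<in> {1/(1+t)<..} then H P f1 f2 v else 0)"
  proof
    fix v :: real
    have "0 < 1/(1+t)" using t by simp
    then have "v \<in> {1/(1+t)<..} \<Longrightarrow> 0 < v" by (meson greaterThan_iff less_trans)
    then show "P * (if v \<in> {1/(1+t)<..} then Fe f1 v else 0) = (if v \<in> {1/(1+t)<..} then H P f1 f2 v else 0)"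
      by (auto simp: H_def Fe_zero)
  qed
  ultimately show ?thesis by simp
qed

lemma H_cdf:
  assumes t: "t > 0"
  shows "1 - cdf (H P f1 f2) (1/(1+t)) = P * cdf_pos f1 t"
proof -
  have "((\<lambda>v. H P f1 f2 v - (if v \<in> {1/(1+t)<..} then H P f1 f2 v else 0)) has_integral (1 - P * cdf_pos f1 t)) UNIV"
    by (intro has_integral_diff H_int H_tail t)
  moreover have "(\<lambda>v. H P f1 f2 v - (if v \<in> {1/(1+t)<..} then H P f1 f2 v else 0))
      = (\<lambda>v. if v \<in> {..1/(1+t)} then H P f1 f2 v else 0)"
    by (auto simp: fun_eq_iff)
  ultimately have "(H P f1 f2 has_integral (1 - P * cdf_pos f1 t)) {..1/(1+t)}"
    by (subst has_integral_restrict[symmetric, of _ UNIV]) auto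
  then show ?thesis by (simp add: cdf_def integral_unique)
qed

lemma H_support: "{v. H P f1 f2 v > 0} = {-1<..<1}"
proof (rule set_eqI)
  fix v :: real
  show "v \<in> {v. H P f1 f2 v > 0} \<longleftrightarrow> v \<in> {-1<..<1}"
  proof (cases "v = 0")
    case True then show ?thesis by (simp add: H_def)
  next
    case False
    show ?thesis
    proof (cases "0 < v \<and> v < 1")
      case True
      then show ?thesis using Fe_pos[OF pos1 int1, of v] P False
        by (simp add: H_def Fe_zero)
    next
      case c2: False
      show ?thesis
      proof (cases "-1 < v \<and> v < 0")
        case True
        then show ?thesis using Fe_pos[OF pos2 int2, of "-v"] P False c2
          by (simp add: H_def Fe_zero)
      next
        case False
        then show ?thesis using c2 \<open>v \<noteq> 0\<close> by (auto simp add: H_def Fe_zero)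
      qed
    qed
  qed
qed

lemma H_mean: "(\<lambda>v. v * H P f1 f2 v) absolutely_integrable_on UNIV"
proof -
  have ai: "H P f1 f2 absolutely_integrable_on UNIV"
    using H_int H_nonneg by (intro nonnegative_absolutely_integrable_1) auto
  have "(\<lambda>v. max (-1) (min 1 v) * H P f1 f2 v) absolutely_integrable_on UNIV"
  proof (rule absolutely_integrable_bounded_measurable_product_real)
    show "(\<lambda>v::real. max (-1) (min 1 v)) \<in> borel_measurable (lebesgue_on UNIV)"
      by (intro continuous_imp_measurable_on_sets_lebesgue continuous_intros) auto
    show "bounded ((\<lambda>v::real. max (-1) (min 1 v)) ` UNIV)"
      by (rule bounded_subset[of "{-1..1}"]) auto
  qed (use ai in auto)
  moreover have "(\<lambda>v. max (-1) (min 1 v) * H P f1 f2 v) = (\<lambda>v. v * H P f1 f2 v)"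
  proof
    fix v :: real
    show "max (-1) (min 1 v) * H P f1 f2 v = v * H P f1 f2 v"
    proof (cases "-1 < v \<and> v < 1")
      case True then show ?thesis by simp
    next
      case False
      then have "H P f1 f2 v = 0" by (auto simp: H_def Fe_zero)
      then show ?thesis by simp
    qed
  qed
  ultimately show ?thesis by simp
qed

end



definition U :: "real \<Rightarrow> real \<Rightarrow> real" where
  "U c v = (if v \<in> {c - 1/2 .. c + 1/2} then 1 else 0)"

lemma U_sym: "U c v = U (-c) (-v)"
  by (auto simp: U_def)

lemma U_int: "(U c has_integral 1) UNIV"
proof -
  have "((\<lambda>v. 1::real) has_integral 1) {c - 1/2 .. c + 1/2}"
    using has_integral_const_real[of "1::real" "c - 1/2" "c + 1/2"] by simp
  then show ?thesis unfolding U_def[abs_def]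
    by (subst has_integral_restrict) auto
qed

lemma U_mean: "((\<lambda>v. v * U c v) has_integral c) UNIV"
proof -
  have "((\<lambda>v. v) has_integral ((c + 1/2)^2/2 - (c - 1/2)^2/2)) {c - 1/2 .. c + 1/2}"
  proof (rule fundamental_theorem_of_calculus[of "c - 1/2" "c + 1/2" "\<lambda>v. v^2/2" "\<lambda>v. v"])
    show "c - 1/2 \<le> c + 1/2" by simp
    fix v :: real
    assume "v \<in> {c - 1/2 .. c + 1/2}"
      have "((\<lambda>v. v^2/2) has_real_derivative v) (at v within {c - 1/2 .. c + 1/2})"
        by (auto intro!: derivative_eq_intros)
      then show "((\<lambda>v. v^2/2) has_vector_derivative v) (at v within {c - 1/2 .. c + 1/2})"
        by (simp add: has_real_derivative_iff_has_vector_derivative)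
  qed
  moreover have "(c + 1/2)^2/2 - (c - 1/2)^2/2 = c"
    by (simp add: power2_eq_square field_simps)
  ultimately have "((\<lambda>v. v) has_integral c) {c - 1/2 .. c + 1/2}"
    by simp
  then have "((\<lambda>v. if v \<in> {c - 1/2 .. c + 1/2} then v else 0) has_integral c) UNIV"
    by (subst has_integral_restrict) auto
  moreover have "(\<lambda>v. if v \<in> {c - 1/2 .. c + 1/2} then v else 0) = (\<lambda>v. v * U c v)"
    by (auto simp: U_def fun_eq_iff)
  ultimately show ?thesis by simp
qed

lemma U_abs: "(\<lambda>v. v * U c v) absolutely_integrable_on UNIV"
proof -
  have "(\<lambda>v::real. v) absolutely_integrable_on {c - 1/2 .. c + 1/2}"
    by (intro absolutely_integrable_continuous_real continuous_intros)
  then have "(\<lambda>v. if v \<in> {c - 1/2 .. c + 1/2} then v else 0) absolutely_integrable_on UNIV"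
    by (subst absolutely_integrable_restrict_UNIV)
  moreover have "(\<lambda>v. if v \<in> {c - 1/2 .. c + 1/2} then v else 0) = (\<lambda>v. v * U c v)"
    by (auto simp: U_def fun_eq_iff)
  ultimately show ?thesis by simp
qed

lemma U_supp: "{v. U c v > 0} = {c - 1/2 .. c + 1/2}"
  by (auto simp: U_def)



definition rr :: "real \<Rightarrow> real" where "rr v = max 0 (1/v - 1)"

lemma C: "filterlim rr at_top (at_right 0)"
proof -
  have "filterlim (\<lambda>v::real. -1 + inverse v) at_top (at_right 0)"
    by (rule filterlim_tendsto_add_at_top[OF tendsto_const filterlim_inverse_at_top_right])
  then have "filterlim (\<lambda>v::real. 1/v - 1) at_top (at_right 0)"
    by (simp add: divide_inverse)
  then show "filterlim rr at_top (at_right 0)"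
    by (rule filterlim_at_top_mono) (rule always_eventually, simp add: rr_def)
qed
lemma D: "(rr \<longlongrightarrow> 0) at_top"
proof -
  have "eventually (\<lambda>v. rr v = 0) at_top"
    unfolding eventually_at_top_linorder
  proof (rule exI[of _ 1], intro allI impI)
    fix n :: real assume "1 \<le> n"
    then have "1/n \<le> 1" by simp
    then show "rr n = 0" by (simp add: rr_def)
  qed
  then show "(rr \<longlongrightarrow> 0) at_top" by (rule tendsto_eventually)
qed
lemma rinv_rr: assumes "t > 0" shows "rinv rr t = 1/(1+t)"
  unfolding rinv_def
proof (rule the_inv_into_f_eq)
  show "inj_on rr {v. 0 < v \<and> 0 < rr v}"
  proof (rule inj_onI)
    fix v w assume v: "v \<in> {v. 0 < v \<and> 0 < rr v}" and w: "w \<in> {v. 0 < v \<and> 0 < rr v}" and e: "rr v = rr w"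
    have mx: "0 < max 0 a \<Longrightarrow> max 0 a = a" for a :: real by linarith
    have "rr v = 1/v - 1" using v mx[of "1/v - 1"] unfolding rr_def by blast
    moreover have "rr w = 1/w - 1" using w mx[of "1/w - 1"] unfolding rr_def by blast
    ultimately have "1/v = 1/w" using e by linarith
    then show "v = w" by (metis inverse_eq_divide inverse_inverse_eq)
  qed
  have "1/(1/(1+t)) - 1 = t" by simp
  then show "rr (1/(1+t)) = t" using assms unfolding rr_def by linarith
  show "1/(1+t) \<in> {v. 0 < v \<and> 0 < rr v}" using assms \<open>1/(1/(1+t)) - 1 = t\<close> unfolding rr_def by simp
qed


lemma CF_rr: "CF rr"
  unfolding CF_def
proof (intro conjI)
  show "continuous_on {0<..} rr" unfolding rr_def[abs_def]
    by (intro continuous_intros) auto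
  show "\<forall>v>0. 0 \<le> rr v" by (simp add: rr_def)
  show "\<forall>v w. 0 < v \<longrightarrow> v < w \<longrightarrow> 0 < rr v \<longrightarrow> 0 < rr w \<longrightarrow> rr w < rr v"
  proof (intro allI impI)
    fix v w :: real assume that: "0 < v" "v < w" "0 < rr v" "0 < rr w"
    have "1/w < 1/v" using that by (simp add: divide_strict_left_mono)
    then show "rr w < rr v" using that by (simp add: rr_def)
  qed
  show "filterlim rr at_top (at_right 0)" by (rule C)
  show "(rr \<longlongrightarrow> 0) at_top" by (rule D)
qed

theorem proposition7:
  fixes x y :: "'a::finite"
    and p :: "'a \<Rightarrow> 'a \<Rightarrow> real"
    and f :: "'a \<Rightarrow> 'a \<Rightarrow> real \<Rightarrow> real"
  assumes "x \<noteq> y"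
    and "SCF_RT {(x, y), (y, x)} p f"
  shows "\<exists>u g r. RUM_CF u g r \<and> rationalizes {(x, y), (y, x)} p f u g r"
proof -
  have pxy: "p x y > 0" and pyx: "p y x > 0" and psum: "p x y + p y x = 1"
    and fxy: "\<And>t. t > 0 \<Longrightarrow> f x y t > 0" "(f x y has_integral 1) {0<..}"
    and fyx: "\<And>t. t > 0 \<Longrightarrow> f y x t > 0" "(f y x has_integral 1) {0<..}"
  proof -
    have S: "SCF {(x,y),(y,x)} p" using assms(2) unfolding SCF_RT_def by (rule conjunct1)
    have F: "\<forall>(a, b) \<in> {(x,y),(y,x)}. (\<forall>t > 0. f a b t > 0) \<and> (f a b has_integral 1) {0<..}"
      using assms(2) unfolding SCF_RT_def by (rule conjunct2)
    have S1: "x \<noteq> y \<and> p x y > 0 \<and> p x y + p y x = 1" and S2: "y \<noteq> x \<and> p y x > 0 \<and> p y x + p x y = 1"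
      using S unfolding SCF_def by simp_all
    have F1: "(\<forall>t > 0. f x y t > 0) \<and> (f x y has_integral 1) {0<..}"
      and F2: "(\<forall>t > 0. f y x t > 0) \<and> (f y x has_integral 1) {0<..}"
      using F by simp_all
    show "p x y > 0" "p y x > 0" "p x y + p y x = 1" using S1 S2 by simp_all
    show "\<And>t. t > 0 \<Longrightarrow> f x y t > 0" "(f x y has_integral 1) {0<..}" using F1 by simp_all
    show "\<And>t. t > 0 \<Longrightarrow> f y x t > 0" "(f y x has_integral 1) {0<..}" using F2 by simp_all
  qed
  define P where "P = p x y"
  have P: "0 < P" "P < 1" and pyxP: "p y x = 1 - P" using pxy pyx psum by (auto simp: P_def)
  define H1 where "H1 = H P (f x y) (f y x)"
  define H2 where "H2 = H (p y x) (f y x) (f x y)"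
  have P2: "0 < p y x" "p y x < 1" using P pyxP by auto
  have H12: "H2 v = H1 (-v)" for v
    unfolding H1_def H2_def pyxP by (simp add: H_sym)
  have H21: "H1 v = H2 (-v)" for v using H12[of "-v"] by simp
  define m where "m = integral UNIV (\<lambda>v. v * H1 v)"
  have H1m: "(\<lambda>v. v * H1 v) absolutely_integrable_on UNIV"
    unfolding H1_def by (rule H_mean[OF P fxy fyx])
  have H1mean: "((\<lambda>v. v * H1 v) has_integral m) UNIV"
    unfolding m_def by (rule integrable_integral[OF set_lebesgue_integral_eq_integral(1)[OF H1m]])
  have H2mean: "((\<lambda>v. v * H2 v) has_integral -m) UNIV"
  proof -
    have a1: "(\<lambda>w. (-1) *\<^sub>R (w * H1 w)) absolutely_integrable_on UNIV"
      by (rule absolutely_integrable_on_scaleR_iff[THEN iffD2, OF disjI2, OF H1m])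
    have a2: "(\<lambda>w. - (w * H1 w)) absolutely_integrable_on UNIV" using a1 by simp
    have i1: "(\<lambda>w. w * H1 w) integrable_on UNIV"
      by (rule set_lebesgue_integral_eq_integral(1)[OF H1m])
    have a3: "integral UNIV (\<lambda>w. - (w * H1 w)) = -m"
      unfolding m_def by (rule integral_neg)
    have us: "uminus ` (UNIV::real set) \<subseteq> UNIV" by simp
    have ul: "(UNIV::real set) \<in> sets lebesgue" by simp
    have "(\<lambda>v. - ((-v) * H1 (-v))) absolutely_integrable_on UNIV \<and> integral UNIV (\<lambda>v. - ((-v) * H1 (-v))) = -m"
      using has_absolute_integral_reflect_real[OF us us ul, of "\<lambda>w. - (w * H1 w)" "-m"] a2 a3
      by blast
    moreover have "(\<lambda>v. - ((-v) * H1 (-v))) = (\<lambda>v. v * H2 v)" by (simp add: H12 fun_eq_iff)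
    ultimately have "(\<lambda>v. v * H2 v) absolutely_integrable_on UNIV \<and> integral UNIV (\<lambda>v. v * H2 v) = -m"
      by simp
    then show ?thesis
      using integrable_integral[OF set_lebesgue_integral_eq_integral(1)] by metis
  qed
  have H2m: "(\<lambda>v. v * H2 v) absolutely_integrable_on UNIV"
    unfolding H2_def by (rule H_mean[OF P2 fyx fxy])
  define u where "u = (\<lambda>a. if a = x then m else 0)"
  define g where "g = (\<lambda>a b. if a = x \<and> b = y then H1 else if a = y \<and> b = x then H2 else U (u a - u b))"
  have RUM: "RUM u g"
    unfolding RUM_def
  proof (intro allI impI)
    fix a b :: 'a assume ab: "a \<noteq> b"
    consider "a = x \<and> b = y" | "a = y \<and> b = x" | "\<not> (a = x \<and> b = y)" "\<not> (a = y \<and> b = x)" by blast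
    then show "(\<forall>v. 0 \<le> g a b v) \<and> (g a b has_integral 1) UNIV \<and>
         (\<lambda>v. v * g a b v) absolutely_integrable_on UNIV \<and>
         ((\<lambda>v. v * g a b v) has_integral u a - u b) UNIV \<and>
         (\<forall>v. g a b v = g b a (- v)) \<and> connected {v. 0 < g a b v}"
    proof cases
      case 1
      then have ga: "g a b = H1" and gb: "g b a = H2" and uab: "u a - u b = m"
        using assms(1) by (auto simp: g_def u_def)
      show ?thesis unfolding ga gb uab
      proof (intro conjI allI)
        show "0 \<le> H1 v" for v unfolding H1_def by (rule H_nonneg[OF P fxy fyx])
        show "(H1 has_integral 1) UNIV" unfolding H1_def by (rule H_int[OF P fxy fyx])
        show "(\<lambda>v. v * H1 v) absolutely_integrable_on UNIV" by (rule H1m)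
        show "((\<lambda>v. v * H1 v) has_integral m) UNIV" by (rule H1mean)
        show "H1 v = H2 (- v)" for v by (rule H21)
        have "{v. 0 < H1 v} = {-1<..<1}" unfolding H1_def by (rule H_support[OF P fxy fyx])
        then show "connected {v. 0 < H1 v}" by simp
      qed
    next
      case 2
      then have ga: "g a b = H2" and gb: "g b a = H1" and uab: "u a - u b = -m"
        using assms(1) by (auto simp: g_def u_def)
      show ?thesis unfolding ga gb uab
      proof (intro conjI allI)
        show "0 \<le> H2 v" for v unfolding H2_def by (rule H_nonneg[OF P2 fyx fxy])
        show "(H2 has_integral 1) UNIV" unfolding H2_def by (rule H_int[OF P2 fyx fxy])
        show "(\<lambda>v. v * H2 v) absolutely_integrable_on UNIV" by (rule H2m)
        show "((\<lambda>v. v * H2 v) has_integral -m) UNIV" by (rule H2mean)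
        show "H2 v = H1 (- v)" for v by (rule H12)
        have "{v. 0 < H2 v} = {-1<..<1}" unfolding H2_def by (rule H_support[OF P2 fyx fxy])
        then show "connected {v. 0 < H2 v}" by simp
      qed
    next
      case 3
      have n1: "\<not> (b = x \<and> a = y)" "\<not> (b = y \<and> a = x)" using 3 by blast+
      have ga: "g a b = U (u a - u b)" unfolding g_def
        by (subst if_not_P[OF 3(1)], subst if_not_P[OF 3(2)]) (rule refl)
      have gb: "g b a = U (u b - u a)" unfolding g_def
        by (subst if_not_P[OF n1(1)], subst if_not_P[OF n1(2)]) (rule refl)
      show ?thesis unfolding ga gb
      proof (intro conjI allI)
        show "0 \<le> U (u a - u b) v" for v unfolding U_def by (rule if_split[THEN iffD2]) simp
        show "(U (u a - u b) has_integral 1) UNIV" by (rule U_int)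
        show "(\<lambda>v. v * U (u a - u b) v) absolutely_integrable_on UNIV" by (rule U_abs)
        show "((\<lambda>v. v * U (u a - u b) v) has_integral (u a - u b)) UNIV" by (rule U_mean)
        show "U (u a - u b) v = U (u b - u a) (- v)" for v
          using U_sym[of "u a - u b" v] by (simp only: minus_diff_eq)
        have "{v. 0 < U (u a - u b) v} = {(u a - u b) - 1/2 .. (u a - u b) + 1/2}" by (rule U_supp)
        then show "connected {v. 0 < U (u a - u b) v}" by simp
      qed
    qed
  qed
  have rat: "rationalizes {(x, y), (y, x)} p f u g rr"
    unfolding rationalizes_def
  proof (intro ballI)
    fix ab assume "ab \<in> {(x, y), (y, x)}"
    then consider "ab = (x,y)" | "ab = (y,x)" by blast
    then show "case ab of (a, b) \<Rightarrow> cdf (g a b) 0 = p b a \<and>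
        (\<forall>t>0. (1 - cdf (g a b) (rinv rr t)) / (1 - cdf (g a b) 0) = cdf_pos (f a b) t)"
    proof cases
      case 1
      have "cdf H1 0 = p y x" unfolding H1_def using H_cdf0[OF P fxy fyx] pyxP by simp
      moreover have "(1 - cdf H1 (rinv rr t)) / (1 - cdf H1 0) = cdf_pos (f x y) t" if "t > 0" for t
      proof -
        have "1 - cdf H1 (rinv rr t) = P * cdf_pos (f x y) t"
          using H_cdf[OF P fxy fyx that] rinv_rr[OF that] by (simp add: H1_def)
        moreover have "1 - cdf H1 0 = P" using H_cdf0[OF P fxy fyx] by (simp add: H1_def)
        ultimately show ?thesis using P by simp
      qed
      ultimately show ?thesis using 1 by (simp add: g_def)
    next
      case 2
      have "cdf H2 0 = p x y" unfolding H2_def using H_cdf0[OF P2 fyx fxy] pyxP by (simp add: P_def)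
      moreover have "(1 - cdf H2 (rinv rr t)) / (1 - cdf H2 0) = cdf_pos (f y x) t" if "t > 0" for t
      proof -
        have "1 - cdf H2 (rinv rr t) = p y x * cdf_pos (f y x) t"
          using H_cdf[OF P2 fyx fxy that] rinv_rr[OF that] by (simp add: H2_def)
        moreover have "1 - cdf H2 0 = p y x" using H_cdf0[OF P2 fyx fxy] by (simp add: H2_def)
        ultimately show ?thesis using P2 by simp
      qed
      ultimately show ?thesis using 2 assms(1) by (simp add: g_def)
    qed
  qed
  show ?thesis
    using RUM CF_rr rat unfolding RUM_CF_def by blast
qed



end
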